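(* Let $X$ be a directed graph whose underlying undirected graph is a tree. Then $X$ is strongly $0$-hyperbolic.
   Context: Directed graphs may have loops and multiple edges. The underlying undirected graph of $X$ has the same vertices and a single undirected edge between $x$ and $y$ whenever $X$ has an edge from $x$ to $y$ or from $y$ to $x$. $d(u,v)$ is the length of a shortest directed path from $u$ to $v$ ($\infty$ if none). Out-ball $\overrightarrow{\mathcal{B}}_r(x)=\{y : d(x,y)\le r\}$, in-ball $\overleftarrow{\mathcal{B}}_r(x)=\{y : d(y,x)\le r\}$, extended to sets by union. A path $[x_0,\dots,x_n]$ is a geodesic if $n=d(x_0,x_n)$. A directed geodesic triangle is an ordered triple $(p,q,r)$ of geodesics with the end of $p$ equal to the start of $q$ and $p\circ q$ having the same start and end as $r$; it is $\delta$-thin if every vertex of $r$ lies in $\overrightarrow{\mathcal{B}}_\delta(p)\cup\overleftarrow{\mathcal{B}}_\delta(q)$, every vertex of $p$ lies in $\overrightarrow{\mathcal{B}}_\delta(r)\cup\overleftarrow{\mathcal{B}}_\delta(q)$, and every vertex of $q$ lies in $\overrightarrow{\mathcal{B}}_\delta(p)\cup\overleftarrow{\mathcal{B}}_\delta(r)$. A directed graph is strongly $\delta$-hyperbolic if all its directed geodesic triangles are $\delta$-thin. *)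

theory Defs
  imports "Graph_Theory.Digraph" "HOL-Library.Extended_Nat"
begin

text \<open>Directed graphs (loops and multiple arcs allowed) are Graph_Theory's
  pre_digraph records: verts G, arcs G, tail G, head G.\<close>

definition uadj :: "('a,'b) pre_digraph \<Rightarrow> 'a \<Rightarrow> 'a \<Rightarrow> bool" where
  "uadj G x y \<longleftrightarrow> (\<exists>e\<in>arcs G. (tail G e = x \<and> head G e = y) \<or> (tail G e = y \<and> head G e = x))"

definition uwalk :: "('a,'b) pre_digraph \<Rightarrow> 'a list \<Rightarrow> bool" where
  "uwalk G xs \<longleftrightarrow> xs \<noteq> [] \<and> set xs \<subseteq> verts G \<and>
     (\<forall>i. Suc i < length xs \<longrightarrow> uadj G (xs ! i) (xs ! Suc i))"

text \<open>A cycle in the underlying undirected (simple, possibly with loops) graph: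
  either a loop [u,u], or a closed walk [v0,...,vn] with n >= 3, v0 = vn and
  v1,...,vn pairwise distinct.\<close>
definition ucycle :: "('a,'b) pre_digraph \<Rightarrow> 'a list \<Rightarrow> bool" where
  "ucycle G xs \<longleftrightarrow> uwalk G xs \<and> hd xs = last xs \<and> distinct (tl xs) \<and>
     (length xs = 2 \<or> length xs \<ge> 4)"

definition underlying_tree :: "('a,'b) pre_digraph \<Rightarrow> bool" where
  "underlying_tree G \<longleftrightarrow> verts G \<noteq> {} \<and>
     (\<forall>u\<in>verts G. \<forall>v\<in>verts G. \<exists>xs. uwalk G xs \<and> hd xs = u \<and> last xs = v) \<and>
     (\<nexists>xs. ucycle G xs)"

definition dpath :: "('a,'b) pre_digraph \<Rightarrow> 'a list \<Rightarrow> bool" where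
  "dpath G xs \<longleftrightarrow> xs \<noteq> [] \<and> set xs \<subseteq> verts G \<and>
     (\<forall>i. Suc i < length xs \<longrightarrow> (\<exists>e\<in>arcs G. tail G e = xs ! i \<and> head G e = xs ! Suc i))"

text \<open>Directed distance; infinity if there is no directed path.\<close>
definition ddist :: "('a,'b) pre_digraph \<Rightarrow> 'a \<Rightarrow> 'a \<Rightarrow> enat" where
  "ddist G u v = (INF xs\<in>{xs. dpath G xs \<and> hd xs = u \<and> last xs = v}. enat (length xs - 1))"

definition out_ball :: "('a,'b) pre_digraph \<Rightarrow> nat \<Rightarrow> 'a set \<Rightarrow> 'a set" where
  "out_ball G r S = {y \<in> verts G. \<exists>x\<in>S. ddist G x y \<le> enat r}"

definition in_ball :: "('a,'b) pre_digraph \<Rightarrow> nat \<Rightarrow> 'a set \<Rightarrow> 'a set" where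
  "in_ball G r S = {y \<in> verts G. \<exists>x\<in>S. ddist G y x \<le> enat r}"

definition geodesic :: "('a,'b) pre_digraph \<Rightarrow> 'a list \<Rightarrow> bool" where
  "geodesic G xs \<longleftrightarrow> dpath G xs \<and> enat (length xs - 1) = ddist G (hd xs) (last xs)"

definition geodesic_triangle :: "('a,'b) pre_digraph \<Rightarrow> 'a list \<Rightarrow> 'a list \<Rightarrow> 'a list \<Rightarrow> bool" where
  "geodesic_triangle G p q r \<longleftrightarrow> geodesic G p \<and> geodesic G q \<and> geodesic G r \<and>
     last p = hd q \<and> hd r = hd p \<and> last r = last q"

definition thin_triangle :: "('a,'b) pre_digraph \<Rightarrow> nat \<Rightarrow> 'a list \<Rightarrow> 'a list \<Rightarrow> 'a list \<Rightarrow> bool" where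
  "thin_triangle G \<delta> p q r \<longleftrightarrow>
     set r \<subseteq> out_ball G \<delta> (set p) \<union> in_ball G \<delta> (set q) \<and>
     set p \<subseteq> out_ball G \<delta> (set r) \<union> in_ball G \<delta> (set q) \<and>
     set q \<subseteq> out_ball G \<delta> (set p) \<union> in_ball G \<delta> (set r)"

definition strongly_hyperbolic :: "('a,'b) pre_digraph \<Rightarrow> nat \<Rightarrow> bool" where
  "strongly_hyperbolic G \<delta> \<longleftrightarrow>
     (\<forall>p q r. geodesic_triangle G p q r \<longrightarrow> thin_triangle G \<delta> p q r)"

end

theory Submission
  imports Defs
begin

definition rw :: "('a \<Rightarrow> 'a \<Rightarrow> bool) \<Rightarrow> 'a set \<Rightarrow> 'a list \<Rightarrow> bool" where
  "rw R V xs \<longleftrightarrow> xs \<noteq> [] \<and> set xs \<subseteq> V \<and> (\<forall>i. Suc i < length xs \<longrightarrow> R (xs ! i) (xs ! Suc i))"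

lemma rw_Nil[simp]: "\<not> rw R V []" by (simp add: rw_def)
lemma rw_single[simp]: "rw R V [x] \<longleftrightarrow> x \<in> V" by (simp add: rw_def)
lemma rw_Cons2[simp]: "rw R V (x#y#xs) \<longleftrightarrow> x \<in> V \<and> R x y \<and> rw R V (y#xs)"
  unfolding rw_def
proof safe
  fix i assume "\<forall>i. Suc i < length (y # xs) \<longrightarrow> R ((y # xs) ! i) ((y # xs) ! Suc i)"
    "R x y" "Suc i < length (x # y # xs)"
  then show "R ((x # y # xs) ! i) ((x # y # xs) ! Suc i)"
    by (cases i) auto
qed (fastforce)+

lemma rw_tl: "rw R V (x#xs) \<Longrightarrow> xs \<noteq> [] \<Longrightarrow> rw R V xs"
  by (cases xs) auto

lemma rw_append: "rw R V (xs@[x]) \<Longrightarrow> rw R V (x#ys) \<Longrightarrow> rw R V (xs@x#ys)"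
proof (induction xs)
  case Nil then show ?case by simp
next
  case (Cons a xs) then show ?case by (cases xs) auto
qed

lemma rw_appendD1: "rw R V (xs@ys) \<Longrightarrow> xs \<noteq> [] \<Longrightarrow> rw R V xs"
proof (induction xs)
  case Nil then show ?case by simp
next
  case (Cons a xs) then show ?case
    by (cases xs; cases ys) auto
qed

lemma rw_appendD2: "rw R V (xs@ys) \<Longrightarrow> ys \<noteq> [] \<Longrightarrow> rw R V ys"
proof (induction xs)
  case Nil then show ?case by simp
next
  case (Cons a xs) then show ?case using rw_tl[of R V a "xs@ys"] by simp
qed

lemma rw_rev: "(\<And>x y. R x y \<Longrightarrow> R y x) \<Longrightarrow> rw R V xs \<Longrightarrow> rw R V (rev xs)"
proof (induction xs)
  case Nil then show ?case by simp
next
  case (Cons a xs)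
  show ?case
  proof (cases xs)
    case Nil then show ?thesis using Cons by simp
  next
    case (Cons h t)
    have "rw R V (rev t @ [h])" using Cons.IH Cons.prems Cons by simp
    moreover have "rw R V [h, a]" using Cons.prems Cons by (auto simp: rw_def)
    ultimately show ?thesis using rw_append[of R V "rev t" h "[a]"] Cons by simp
  qed
qed

lemma rw_shortcut: "rw R V (A @ x # B @ x # C) \<Longrightarrow> rw R V (A @ x # C)"
proof -
  assume h: "rw R V (A @ x # B @ x # C)"
  have "rw R V (A @ [x])" using rw_appendD1[of R V "A@[x]" "B @ x # C"] h by simp
  moreover have "rw R V (x # C)" using rw_appendD2[of R V "A @ x # B" "x # C"] h by simp
  ultimately show ?thesis by (rule rw_append)
qed

lemma rw_join: "rw R V xs \<Longrightarrow> rw R V ys \<Longrightarrow> last xs = hd ys \<Longrightarrow>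
   rw R V (xs @ tl ys) \<and> hd (xs @ tl ys) = hd xs \<and> last (xs @ tl ys) = last ys
   \<and> set (xs @ tl ys) \<subseteq> set xs \<union> set ys"
proof -
  assume a: "rw R V xs" "rw R V ys" "last xs = hd ys"
  have xsne: "xs \<noteq> []" using a(1) by (simp add: rw_def)
  have xs: "xs = butlast xs @ [last xs]" using xsne by simp
  have ys: "ys = hd ys # tl ys" using a by (simp add: rw_def)
  have "rw R V (butlast xs @ last xs # tl ys)"
    using rw_append[of R V "butlast xs" "last xs" "tl ys"] a xs ys by metis
  moreover have "butlast xs @ last xs # tl ys = xs @ tl ys" using xs by (metis append.assoc append_Cons append_Nil)
  moreover have "last (xs @ tl ys) = last ys" using a ys xs
    by (metis last_appendL last_appendR last_ConsL last_ConsR)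
  moreover have "set (xs @ tl ys) \<subseteq> set xs \<union> set ys" proof -
    have "set (tl ys) \<subseteq> set ys" by (cases ys) auto
    then show ?thesis by auto
  qed
  moreover have "hd (xs @ tl ys) = hd xs" using a by (simp add: rw_def)
  ultimately show ?thesis by simp
qed

lemma rw_simple: "rw R V xs \<Longrightarrow> \<exists>ys. rw R V ys \<and> distinct ys \<and> hd ys = hd xs \<and> last ys = last xs \<and> set ys \<subseteq> set xs"
proof (induction "length xs" arbitrary: xs rule: less_induct)
  case less
  show ?case
  proof (cases "distinct xs")
    case True then show ?thesis using less.prems by blast
  next
    case False
    then obtain A x B C where xs: "xs = A @ [x] @ B @ [x] @ C" using not_distinct_decomp by blast
    define xs' where "xs' = A @ x # C"
    have "rw R V xs'" using less.prems xs rw_shortcut unfolding xs'_def by simp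
    moreover have "length xs' < length xs" using xs xs'_def by simp
    ultimately obtain ys where ys: "rw R V ys \<and> distinct ys \<and> hd ys = hd xs' \<and> last ys = last xs' \<and> set ys \<subseteq> set xs'"
      using less.hyps by blast
    have "hd xs' = hd xs" using xs xs'_def by (cases A) auto
    moreover have "last xs' = last xs" using xs xs'_def by (cases C) auto
    moreover have "set xs' \<subseteq> set xs" using xs xs'_def by auto
    ultimately show ?thesis using ys by (intro exI[of _ ys]) auto
  qed
qed

lemma rw_mono: "rw R V xs \<Longrightarrow> (\<And>x y. R x y \<Longrightarrow> R' x y) \<Longrightarrow> rw R' V xs"
  by (auto simp: rw_def)

definition arel :: "('a,'b) pre_digraph \<Rightarrow> 'a \<Rightarrow> 'a \<Rightarrow> bool" where
  "arel G x y \<longleftrightarrow> (\<exists>e\<in>arcs G. tail G e = x \<and> head G e = y)"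

lemma uwalk_rw: "uwalk G = rw (uadj G) (verts G)"
  by (auto simp: fun_eq_iff uwalk_def rw_def)
lemma dpath_rw: "dpath G = rw (arel G) (verts G)"
  by (auto simp: fun_eq_iff dpath_def rw_def arel_def)

lemma uadj_sym: "uadj G x y \<Longrightarrow> uadj G y x" by (auto simp: uadj_def)

lemma cycle_constr:
  assumes nc: "\<And>xs. \<not> ucycle G xs"
    and y: "rw (uadj G) (verts G) (u#Y)" "distinct (u#Y)"
    and z: "rw (uadj G) (verts G) (u#Z)" "distinct (u#Z)"
    and ne: "Y \<noteq> []" "Z \<noteq> []" "hd Y \<noteq> hd Z" "last Y = last Z"
  shows False
proof -
  let ?P = "\<lambda>x. x \<notin> set Y"
  define pre where "pre = takeWhile ?P Z"
  define D where "D = dropWhile ?P Z"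
  have ZD: "Z = pre @ D" unfolding pre_def D_def by simp
  have "D \<noteq> []"
  proof
    assume "D = []"
    then have "\<forall>x\<in>set Z. ?P x" unfolding D_def by (simp add: dropWhile_eq_Nil_conv)
    then show False using ne by (metis last_in_set)
  qed
  then obtain c rest where D: "D = c # rest" by (cases D) auto
  have cY: "c \<in> set Y" using D \<open>D \<noteq> []\<close> hd_dropWhile[of ?P Z] unfolding D_def by auto
  then obtain A B where Y: "Y = A @ c # B" by (meson split_list)
  have preY: "\<forall>x\<in>set pre. x \<notin> set Y" unfolding pre_def using set_takeWhileD by fastforce
  have w1: "rw (uadj G) (verts G) (u # A @ [c])"
    using rw_appendD1[of _ _ "u # A @ [c]" B] y(1) Y by simp
  have "rw (uadj G) (verts G) (u # pre @ [c])"
    using rw_appendD1[of _ _ "u # pre @ [c]" rest] z(1) ZD D by simp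
  then have w2: "rw (uadj G) (verts G) (c # rev pre @ [u])"
    using rw_rev[of "uadj G" "verts G" "u # pre @ [c]"] uadj_sym by fastforce
  have w: "rw (uadj G) (verts G) ((u # A) @ c # (rev pre @ [u]))"
    using rw_append[of "uadj G" "verts G" "u#A" c "rev pre @ [u]"] w1 w2 by simp
  have "ucycle G (u # A @ c # rev pre @ [u])"
    unfolding ucycle_def uwalk_rw
  proof (intro conjI)
    show "rw (uadj G) (verts G) (u # A @ c # rev pre @ [u])" using w by simp
    show "hd (u # A @ c # rev pre @ [u]) = last (u # A @ c # rev pre @ [u])" by simp
    show "distinct (tl (u # A @ c # rev pre @ [u]))"
      using y(2) z(2) Y ZD D preY by auto
    show "length (u # A @ c # rev pre @ [u]) = 2 \<or> 4 \<le> length (u # A @ c # rev pre @ [u])"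
    proof (cases "A = [] \<and> pre = []")
      case True
      then have "hd Y = c" "hd Z = c" using Y ZD D by auto
      then show ?thesis using ne by simp
    next
      case False then show ?thesis by (cases A; cases pre) auto
    qed
  qed
  then show False using nc by blast
qed

lemma uniq_aux:
  assumes nc: "\<And>xs. \<not> ucycle G xs"
  shows "rw (uadj G) (verts G) (u#Y) \<Longrightarrow> distinct (u#Y) \<Longrightarrow> rw (uadj G) (verts G) (u#Z)
     \<Longrightarrow> distinct (u#Z) \<Longrightarrow> last (u#Y) = last (u#Z) \<Longrightarrow> Y = Z"
proof (induction Y arbitrary: u Z)
  case Nil
  then show ?case by (cases Z) (auto, metis last_in_set list.distinct(1))
next
  case (Cons y Y')
  show ?case
  proof (cases Z)
    case Nil
    then show ?thesis using Cons.prems by (simp, metis last_in_set list.distinct(1) list.set_intros(1) set_ConsD)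
  next
    case (Cons z Z')
    show ?thesis
    proof (cases "y = z")
      case True
      have "Y' = Z'"
        using Cons.IH[of y Z'] Cons.prems Cons True rw_tl by fastforce
      then show ?thesis using Cons True by simp
    next
      case False
      have "last (y#Y') = last (z#Z')" using Cons.prems Cons by simp
      then show ?thesis using cycle_constr[OF nc, of u "y#Y'" "z#Z'"] Cons.prems Cons False by simp
    qed
  qed
qed

lemma key:
  assumes nc: "\<And>xs. \<not> ucycle G xs"
    and W: "rw (uadj G) (verts G) W" and ys: "rw (uadj G) (verts G) ys" "distinct ys"
    and e: "hd ys = hd W" "last ys = last W"
  shows "set ys \<subseteq> set W"
proof -
  obtain zs where zs: "rw (uadj G) (verts G) zs" "distinct zs" "hd zs = hd W" "last zs = last W" "set zs \<subseteq> set W"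
    using rw_simple[OF W] by blast
  obtain u Y where Y: "ys = u # Y" using ys by (cases ys) auto
  obtain Z where Z: "zs = u # Z" using zs e Y by (cases zs) auto
  have "last (u#Y) = last (u#Z)" using Y Z e zs(4) by simp
  then have "Y = Z" using uniq_aux[OF nc, of u Y Z] ys zs Y Z by simp
  then show ?thesis using Y Z zs by simp
qed

lemma ddist_le: "dpath G ys \<Longrightarrow> ddist G (hd ys) (last ys) \<le> enat (length ys - 1)"
  unfolding ddist_def by (rule INF_lower) simp

lemma geodesic_distinct: "geodesic G xs \<Longrightarrow> distinct xs"
proof (rule ccontr)
  assume g: "geodesic G xs" and nd: "\<not> distinct xs"
  then obtain A x B C where xs: "xs = A @ [x] @ B @ [x] @ C" using not_distinct_decomp by blast
  define xs' where "xs' = A @ x # C"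
  have "rw (arel G) (verts G) (A @ x # B @ x # C)" using g xs unfolding geodesic_def dpath_rw by simp
  then have "dpath G xs'" using rw_shortcut unfolding xs'_def dpath_rw by metis
  moreover have "hd xs' = hd xs" using xs xs'_def by (cases A) auto
  moreover have "last xs' = last xs" using xs xs'_def by (cases C) auto
  ultimately have "ddist G (hd xs) (last xs) \<le> enat (length xs' - 1)" using ddist_le by metis
  moreover have "length xs' < length xs" using xs xs'_def by simp
  moreover have "enat (length xs - 1) = ddist G (hd xs) (last xs)" using g unfolding geodesic_def by simp
  ultimately have "length xs - 1 \<le> length xs' - 1" by (metis enat_ord_simps(1))
  then show False using xs xs'_def by simp
qed

lemma geo_props: "geodesic G xs \<Longrightarrow> rw (uadj G) (verts G) xs \<and> distinct xs"
  using geodesic_distinct[of G xs] unfolding geodesic_def dpath_rw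
  by (auto intro: rw_mono simp: rw_def arel_def uadj_def)

lemma ball0: "set xs \<subseteq> verts G \<Longrightarrow> set xs \<subseteq> out_ball G 0 (set xs) \<and> set xs \<subseteq> in_ball G 0 (set xs)"
proof -
  assume a: "set xs \<subseteq> verts G"
  have "\<And>x. x \<in> verts G \<Longrightarrow> ddist G x x \<le> enat 0"
    using ddist_le[of G "[x]" for x] by (simp add: dpath_def)
  then show ?thesis using a unfolding out_ball_def in_ball_def by auto
qed

theorem proposition2p4:
  fixes G :: "('a,'b) pre_digraph"
  assumes "wf_digraph G"
    and "underlying_tree G"
  shows "strongly_hyperbolic G 0"
  unfolding strongly_hyperbolic_def
proof (intro allI impI)
  fix p q r assume t: "geodesic_triangle G p q r"
  have nc: "\<And>xs. \<not> ucycle G xs" using assms(2) unfolding underlying_tree_def by blast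
  have p: "rw (uadj G) (verts G) p" "distinct p" and q: "rw (uadj G) (verts G) q" "distinct q"
    and r: "rw (uadj G) (verts G) r" "distinct r"
    using t geo_props unfolding geodesic_triangle_def by blast+
  have e: "last p = hd q" "hd r = hd p" "last r = last q" using t unfolding geodesic_triangle_def by auto
  have sym: "\<And>x y. uadj G x y \<Longrightarrow> uadj G y x" by (rule uadj_sym)
  have rp: "rw (uadj G) (verts G) (rev p)" "rw (uadj G) (verts G) (rev q)"
    using rw_rev[OF _ p(1)] rw_rev[OF _ q(1)] sym by blast+
  have s1: "set r \<subseteq> set p \<union> set q"
    using rw_join[OF p(1) q(1) e(1)] key[OF nc _ r, of "p @ tl q"] e by auto
  have s2: "set p \<subseteq> set r \<union> set q"
    using rw_join[OF r(1) rp(2)] key[OF nc _ p, of "r @ tl (rev q)"] e p q r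
    by (simp add: hd_rev last_rev) blast
  have s3: "set q \<subseteq> set p \<union> set r"
    using rw_join[OF rp(1) r(1)] key[OF nc _ q, of "rev p @ tl r"] e p q r
    by (simp add: hd_rev last_rev) blast
  have V: "set p \<subseteq> verts G" "set q \<subseteq> verts G" "set r \<subseteq> verts G"
    using p q r by (auto simp: rw_def)
  show "thin_triangle G 0 p q r"
    unfolding thin_triangle_def using s1 s2 s3 ball0[OF V(1)] ball0[OF V(2)] ball0[OF V(3)] by blast
qed

end
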